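(* Let $a\in(0,1)$, $r\ge1$, $\kappa_1\in(a,1)$, and assume $r\le \dfrac{as}{\sqrt{5\log\big(2/(1-a/\kappa_1)\big)}}$. Then for every $\theta\in\mathcal{D}_{a,r}$, $$\langle M(\theta),\theta^*\rangle\ge (a/\kappa_1)\|\theta^*\|^2 .$$
   Context: Fix $d\ge1$, $\sigma>0$ and $\theta^*\in\mathbb{R}^d\setminus\{0\}$. Let $Y$ be distributed according to the mixture $\tfrac12 N(\theta^*,\sigma^2I_d)+\tfrac12 N(-\theta^*,\sigma^2I_d)$. Let $\omega(t):=1/(1+e^{-2t})$. The population EM operator is $M(\theta):=2\,\mathbb{E}\big[Y\,\omega(\langle\theta,Y\rangle/\sigma^2)\big]$. The signal-to-noise ratio is $s:=\|\theta^*\|/\sigma$. For $a\in(0,1)$ and $r\ge1$ define $\mathcal{H}_a:=\{\theta:\langle\theta,\theta^*\rangle\ge a\|\theta^*\|^2\}$, $\mathcal{B}_r:=\{\theta:\|\theta\|\le r\|\theta^*\|\}$ and $\mathcal{D}_{a,r}:=\mathcal{H}_a\cap\mathcal{B}_r$. *)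

theory Defs
  imports "HOL-Analysis.Analysis"
begin

definition omega :: "real \<Rightarrow> real" where
  "omega t = 1 / (1 + exp (-2 * t))"

definition gauss_density :: "'a::euclidean_space \<Rightarrow> real \<Rightarrow> 'a \<Rightarrow> real" where
  "gauss_density mu \<sigma> y =
     exp (- (norm (y - mu))\<^sup>2 / (2 * \<sigma>\<^sup>2)) / (sqrt (2 * pi * \<sigma>\<^sup>2)) ^ DIM('a)"

definition mix_density :: "'a::euclidean_space \<Rightarrow> real \<Rightarrow> 'a \<Rightarrow> real" where
  "mix_density \<theta>s \<sigma> y = gauss_density \<theta>s \<sigma> y / 2 + gauss_density (- \<theta>s) \<sigma> y / 2"

definition mix_measure :: "'a::euclidean_space \<Rightarrow> real \<Rightarrow> 'a measure" where
  "mix_measure \<theta>s \<sigma> = density lborel (\<lambda>y. ennreal (mix_density \<theta>s \<sigma> y))"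

definition EM_op :: "'a::euclidean_space \<Rightarrow> real \<Rightarrow> 'a \<Rightarrow> 'a" where
  "EM_op \<theta>s \<sigma> \<theta> =
     2 *\<^sub>R (\<integral>y. omega (inner \<theta> y / \<sigma>\<^sup>2) *\<^sub>R y \<partial>mix_measure \<theta>s \<sigma>)"

definition D_set :: "'a::euclidean_space \<Rightarrow> real \<Rightarrow> real \<Rightarrow> 'a set" where
  "D_set \<theta>s a r = {\<theta>. inner \<theta> \<theta>s \<ge> a * (norm \<theta>s)\<^sup>2 \<and> norm \<theta> \<le> r * norm \<theta>s}"

end

theory Submission
  imports Defs "HOL-Probability.Probability"
begin

lemma gauss_prod:
  fixes x :: "'a::euclidean_space"
  shows "gauss_density 0 \<sigma> x = (\<Prod>b\<in>Basis. normal_density 0 \<sigma> (x \<bullet> b))"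
proof -
  have n: "(norm x)\<^sup>2 = (\<Sum>b\<in>Basis. (x \<bullet> b)\<^sup>2)"
  proof -
    have "x \<bullet> x = (\<Sum>b\<in>Basis. (x \<bullet> b) * (x \<bullet> b))" by (rule euclidean_inner)
    moreover have "norm x * norm x = x \<bullet> x" by (simp add: power2_eq_square[symmetric] power2_norm_eq_inner)
    ultimately show ?thesis by (simp add: power2_eq_square)
  qed
  have "exp (- (norm x)\<^sup>2 / (2 * \<sigma>\<^sup>2)) = (\<Prod>b\<in>Basis. exp (- (x \<bullet> b)\<^sup>2 / (2 * \<sigma>\<^sup>2)))"
  proof -
    have "- (norm x)\<^sup>2 / (2 * \<sigma>\<^sup>2) = (\<Sum>b\<in>Basis. - (x \<bullet> b)\<^sup>2 / (2 * \<sigma>\<^sup>2))"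
      unfolding n by (simp add: sum_divide_distrib sum_negf)
    then show ?thesis by (simp add: exp_sum)
  qed
  then show ?thesis
    unfolding gauss_density_def normal_density_def
    by (simp add: prod_dividef prod_constant mult.commute)
qed

lemma nn_gauss0: assumes "\<sigma> > 0" shows "(\<integral>\<^sup>+x. ennreal (gauss_density (0::'a::euclidean_space) \<sigma> x) \<partial>lborel) = 1"
proof -
  have "(\<integral>\<^sup>+x. ennreal (gauss_density (0::'a) \<sigma> x) \<partial>lborel)
       = (\<integral>\<^sup>+x. (\<Prod>b\<in>(Basis::'a set). ennreal (normal_density 0 \<sigma> (x \<bullet> b))) \<partial>lborel)"
    by (simp add: gauss_prod prod_ennreal)
  also have "\<dots> = (\<Prod>b\<in>(Basis::'a set). (\<integral>\<^sup>+x. ennreal (normal_density 0 \<sigma> x) \<partial>lborel))"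
    by (rule nn_integral_lborel_prod) auto
  also have "(\<integral>\<^sup>+x. ennreal (normal_density 0 \<sigma> x) \<partial>lborel) = 1"
    using assms by (subst nn_integral_eq_integral) auto
  finally show ?thesis by simp
qed

lemma nn_shift:
  fixes f :: "'a::euclidean_space \<Rightarrow> ennreal"
  assumes [measurable]: "f \<in> borel_measurable borel"
  shows "(\<integral>\<^sup>+x. f x \<partial>lborel) = (\<integral>\<^sup>+x. f (c + x) \<partial>lborel)"
proof -
  have "(\<integral>\<^sup>+x. f x \<partial>lborel) = (\<integral>\<^sup>+x. f x \<partial>distr lborel borel ((+) c))"
    by (simp add: lborel_distr_plus)
  also have "\<dots> = (\<integral>\<^sup>+x. f (c + x) \<partial>lborel)"
    by (subst nn_integral_distr) auto
  finally show ?thesis .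
qed

lemma int_shift:
  fixes f :: "'a::euclidean_space \<Rightarrow> real"
  assumes [measurable]: "f \<in> borel_measurable borel"
  shows "(\<integral>x. f x \<partial>lborel) = (\<integral>x. f (c + x) \<partial>lborel)"
proof -
  have "(\<integral>x. f x \<partial>lborel) = (\<integral>x. f x \<partial>distr lborel borel ((+) c))"
    by (simp add: lborel_distr_plus)
  also have "\<dots> = (\<integral>x. f (c + x) \<partial>lborel)"
    by (subst integral_distr) auto
  finally show ?thesis .
qed

lemma lborel_uminus: "distr lborel borel uminus = (lborel :: 'a::euclidean_space measure)"
  using lborel_affine[of "-1" "0::'a"] by (simp add: density_1)

lemma int_uminus:
  fixes f :: "'a::euclidean_space \<Rightarrow> real"
  assumes [measurable]: "f \<in> borel_measurable borel"
  shows "(\<integral>x. f x \<partial>lborel) = (\<integral>x. f (- x) \<partial>lborel)"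
proof -
  have "(\<integral>x. f x \<partial>lborel) = (\<integral>x. f x \<partial>distr lborel borel uminus)"
    by (simp add: lborel_uminus)
  also have "\<dots> = (\<integral>x. f (- x) \<partial>lborel)"
    by (subst integral_distr) auto
  finally show ?thesis .
qed

lemma gauss_meas[measurable]: "gauss_density \<mu> \<sigma> \<in> borel_measurable borel"
  unfolding gauss_density_def by measurable

lemma gauss_nonneg: "0 \<le> gauss_density \<mu> \<sigma> x"
  unfolding gauss_density_def by simp

lemma nn_gauss: assumes "\<sigma> > 0" shows "(\<integral>\<^sup>+x. ennreal (gauss_density (\<mu>::'a::euclidean_space) \<sigma> x) \<partial>lborel) = 1"
proof -
  have "(\<integral>\<^sup>+x. ennreal (gauss_density \<mu> \<sigma> x) \<partial>lborel) = (\<integral>\<^sup>+x. ennreal (gauss_density \<mu> \<sigma> (\<mu> + x)) \<partial>lborel)"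
    by (rule nn_shift) measurable
  also have "\<dots> = (\<integral>\<^sup>+x. ennreal (gauss_density (0::'a) \<sigma> x) \<partial>lborel)"
    by (simp add: gauss_density_def)
  finally show ?thesis using nn_gauss0[OF assms] by simp
qed

lemma complete_sq:
  fixes b y \<mu> :: "'a::euclidean_space"
  assumes "\<sigma> > 0"
  shows "exp (b \<bullet> y) * gauss_density \<mu> \<sigma> y
       = exp (b \<bullet> \<mu> + \<sigma>\<^sup>2 * (norm b)\<^sup>2 / 2) * gauss_density (\<mu> + \<sigma>\<^sup>2 *\<^sub>R b) \<sigma> y"
proof -
  have e: "b \<bullet> y - (norm (y - \<mu>))\<^sup>2 / (2 * \<sigma>\<^sup>2)
     = b \<bullet> \<mu> + \<sigma>\<^sup>2 * (norm b)\<^sup>2 / 2 - (norm (y - (\<mu> + \<sigma>\<^sup>2 *\<^sub>R b)))\<^sup>2 / (2 * \<sigma>\<^sup>2)"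
  proof -
    have "(norm (y - (\<mu> + \<sigma>\<^sup>2 *\<^sub>R b)))\<^sup>2 = (norm (y - \<mu>))\<^sup>2 - 2 * \<sigma>\<^sup>2 * (b \<bullet> y - b \<bullet> \<mu>) + \<sigma>\<^sup>2 * \<sigma>\<^sup>2 * (norm b)\<^sup>2"
      unfolding power2_norm_eq_inner
      by (simp add: inner_diff_left inner_diff_right inner_add_left inner_add_right
          inner_commute algebra_simps power2_eq_square)
    note h = this
    show ?thesis unfolding h using assms by (simp add: field_simps power2_eq_square)
  qed
  have "exp (b \<bullet> y) * exp (- (norm (y - \<mu>))\<^sup>2 / (2 * \<sigma>\<^sup>2))
     = exp (b \<bullet> \<mu> + \<sigma>\<^sup>2 * (norm b)\<^sup>2 / 2) * exp (- (norm (y - (\<mu> + \<sigma>\<^sup>2 *\<^sub>R b)))\<^sup>2 / (2 * \<sigma>\<^sup>2))"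
    using e by (simp add: exp_add[symmetric] algebra_simps)
  then show ?thesis unfolding gauss_density_def by (simp add: field_simps)
qed

lemma nn_mgf:
  fixes b \<mu> :: "'a::euclidean_space"
  assumes "\<sigma> > 0"
  shows "(\<integral>\<^sup>+y. ennreal (exp (b \<bullet> y) * gauss_density \<mu> \<sigma> y) \<partial>lborel)
       = ennreal (exp (b \<bullet> \<mu> + \<sigma>\<^sup>2 * (norm b)\<^sup>2 / 2))"
proof -
  have "(\<integral>\<^sup>+y. ennreal (exp (b \<bullet> y) * gauss_density \<mu> \<sigma> y) \<partial>lborel)
     = (\<integral>\<^sup>+y. ennreal (exp (b \<bullet> \<mu> + \<sigma>\<^sup>2 * (norm b)\<^sup>2 / 2)) * ennreal (gauss_density (\<mu> + \<sigma>\<^sup>2 *\<^sub>R b) \<sigma> y) \<partial>lborel)"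
    using assms by (simp add: complete_sq ennreal_mult gauss_nonneg)
  also have "\<dots> = ennreal (exp (b \<bullet> \<mu> + \<sigma>\<^sup>2 * (norm b)\<^sup>2 / 2)) * (\<integral>\<^sup>+y. ennreal (gauss_density (\<mu> + \<sigma>\<^sup>2 *\<^sub>R b) \<sigma> y) \<partial>lborel)"
    by (rule nn_integral_cmult) measurable
  finally show ?thesis by (simp add: nn_gauss[OF assms])
qed

lemma mgf:
  fixes b \<mu> :: "'a::euclidean_space"
  assumes "\<sigma> > 0"
  shows "integrable lborel (\<lambda>y. exp (b \<bullet> y) * gauss_density \<mu> \<sigma> y)"
    and "(\<integral>y. exp (b \<bullet> y) * gauss_density \<mu> \<sigma> y \<partial>lborel) = exp (b \<bullet> \<mu> + \<sigma>\<^sup>2 * (norm b)\<^sup>2 / 2)"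
proof -
  show "integrable lborel (\<lambda>y. exp (b \<bullet> y) * gauss_density \<mu> \<sigma> y)"
    by (rule integrableI_nn_integral_finite[OF _ _ nn_mgf[OF assms]]) (auto simp: gauss_nonneg)
  show "(\<integral>y. exp (b \<bullet> y) * gauss_density \<mu> \<sigma> y \<partial>lborel) = exp (b \<bullet> \<mu> + \<sigma>\<^sup>2 * (norm b)\<^sup>2 / 2)"
    by (subst integral_eq_nn_integral) (auto simp: gauss_nonneg nn_mgf[OF assms])
qed

lemma mgf_gauss:
  fixes \<mu> :: "'a::euclidean_space"
  assumes "\<sigma> > 0"
  shows "integrable lborel (gauss_density \<mu> \<sigma>)" "(\<integral>y. gauss_density \<mu> \<sigma> y \<partial>lborel) = 1"
  using mgf[OF assms, of 0 \<mu>] by auto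

lemma abs_le_exps: "\<bar>t::real\<bar> \<le> exp t + exp (- t)"
proof -
  have "t \<le> exp t" using exp_ge_add_one_self[of t] by linarith
  moreover have "- t \<le> exp (- t)" using exp_ge_add_one_self[of "-t"] by linarith
  moreover have "0 < exp t" "0 < exp (-t)" by auto
  ultimately show ?thesis unfolding abs_le_iff by linarith
qed

lemma mean_integrable:
  fixes c \<mu> :: "'a::euclidean_space"
  assumes "\<sigma> > 0"
  shows "integrable lborel (\<lambda>y. gauss_density \<mu> \<sigma> y * (y \<bullet> c))"
proof (rule Bochner_Integration.integrable_bound)
  show "integrable lborel (\<lambda>y. exp (c \<bullet> y) * gauss_density \<mu> \<sigma> y + exp ((- c) \<bullet> y) * gauss_density \<mu> \<sigma> y)"
    by (intro Bochner_Integration.integrable_add mgf(1)[OF assms])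
  show "(\<lambda>y. gauss_density \<mu> \<sigma> y * (y \<bullet> c)) \<in> borel_measurable lborel" by measurable
  show "AE y in lborel. norm (gauss_density \<mu> \<sigma> y * (y \<bullet> c))
          \<le> norm (exp (c \<bullet> y) * gauss_density \<mu> \<sigma> y + exp ((- c) \<bullet> y) * gauss_density \<mu> \<sigma> y)"
  proof (rule AE_I2)
    fix y
    have g: "0 \<le> gauss_density \<mu> \<sigma> y" by (rule gauss_nonneg)
    have "\<bar>y \<bullet> c\<bar> \<le> exp (c \<bullet> y) + exp ((- c) \<bullet> y)"
      using abs_le_exps[of "y \<bullet> c"] by (simp add: inner_commute)
    from mult_left_mono[OF this g] g show "norm (gauss_density \<mu> \<sigma> y * (y \<bullet> c))
          \<le> norm (exp (c \<bullet> y) * gauss_density \<mu> \<sigma> y + exp ((- c) \<bullet> y) * gauss_density \<mu> \<sigma> y)"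
      by (simp add: abs_mult algebra_simps)
  qed
qed

lemma mean_integral:
  fixes c \<mu> :: "'a::euclidean_space"
  assumes "\<sigma> > 0"
  shows "(\<integral>y. gauss_density \<mu> \<sigma> y * (y \<bullet> c) \<partial>lborel) = \<mu> \<bullet> c"
proof -
  let ?g = "gauss_density (0::'a) \<sigma>"
  have sh: "gauss_density \<mu> \<sigma> (\<mu> + z) = ?g z" for z by (simp add: gauss_density_def)
  have neg: "?g (- z) = ?g z" for z by (simp add: gauss_density_def)
  have I0: "(\<integral>z. ?g z * (z \<bullet> c) \<partial>lborel) = 0"
  proof -
    have "(\<integral>z. ?g z * (z \<bullet> c) \<partial>lborel) = (\<integral>z. ?g (- z) * ((- z) \<bullet> c) \<partial>lborel)"
      by (rule int_uminus) measurable
    also have "\<dots> = - (\<integral>z. ?g z * (z \<bullet> c) \<partial>lborel)"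
      by (simp add: neg)
    finally show ?thesis by simp
  qed
  have "(\<integral>y. gauss_density \<mu> \<sigma> y * (y \<bullet> c) \<partial>lborel) = (\<integral>z. gauss_density \<mu> \<sigma> (\<mu> + z) * ((\<mu> + z) \<bullet> c) \<partial>lborel)"
    by (rule int_shift) measurable
  also have "\<dots> = (\<integral>z. ?g z * (\<mu> \<bullet> c) + ?g z * (z \<bullet> c) \<partial>lborel)"
    unfolding sh by (simp add: inner_add_left algebra_simps)
  also have "\<dots> = (\<integral>z. ?g z * (\<mu> \<bullet> c) \<partial>lborel) + (\<integral>z. ?g z * (z \<bullet> c) \<partial>lborel)"
    by (rule Bochner_Integration.integral_add) (use mgf_gauss[OF assms] mean_integrable[OF assms] in auto)
  also have "\<dots> = \<mu> \<bullet> c"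
    by (simp add: I0 mgf_gauss(2)[OF assms, of 0])
  finally show ?thesis .
qed

lemma omega_nonneg: "0 \<le> omega t"
  unfolding omega_def by (simp add: add_pos_pos)

lemma omega_le1: "omega t \<le> 1"
proof -
  have "0 < 1 + exp (- (t * 2))" "0 < 1 + exp (-2 * t)" by (simp_all add: add_pos_pos)
  then show ?thesis unfolding omega_def by (simp add: divide_le_eq)
qed

lemma omega_neg: "1 - omega t = omega (- t)"
proof -
  have e: "exp (-2 * t) = 1 / exp (2 * t)" by (simp add: exp_minus field_simps)
  have "1 + exp (2*t) > 0" "1 + exp (t*2) > 0" by (simp_all add: add_pos_pos)
  then show ?thesis unfolding omega_def e by (simp add: field_simps add_divide_distrib[symmetric])
qed

lemma omega_le_exp:
  assumes "0 \<le> l" "l \<le> 1"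
  shows "omega t \<le> exp (2 * l * t)"
proof (cases "t \<ge> 0")
  case True
  then have "1 \<le> exp (2 * l * t)" using assms by simp
  then show ?thesis using omega_le1[of t] by linarith
next
  case False
  have "omega t \<le> 1 / exp (-2 * t)"
    unfolding omega_def by (rule divide_left_mono) (auto intro!: mult_pos_pos add_pos_pos)
  also have "\<dots> = exp (2 * t)" by (simp add: exp_minus field_simps)
  also have "\<dots> \<le> exp (2 * l * t)" using False assms
    by (simp add: mult_left_le_one_le mult_right_le_one_le)
  finally show ?thesis .
qed

lemma one_minus_omega_le_exp:
  assumes "0 \<le> l" "l \<le> 1"
  shows "1 - omega t \<le> exp (- 2 * l * t)"
  using omega_le_exp[OF assms, of "-t"] omega_neg[of t] by simp

lemma abs_le_exp_eps:
  assumes "\<epsilon> > 0"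
  shows "\<bar>x::real\<bar> \<le> (exp (\<epsilon> * x) + exp (- \<epsilon> * x)) / (exp 1 * \<epsilon>)"
proof -
  have "\<epsilon> * \<bar>x\<bar> \<le> exp (\<epsilon> * \<bar>x\<bar> - 1)" using exp_ge_add_one_self[of "\<epsilon> * \<bar>x\<bar> - 1"] by linarith
  also have "\<dots> = exp (\<epsilon> * \<bar>x\<bar>) / exp 1" by (simp add: exp_diff)
  also have "exp (\<epsilon> * \<bar>x\<bar>) \<le> exp (\<epsilon> * x) + exp (- \<epsilon> * x)"
    by (cases "x \<ge> 0") (auto simp: add_increasing add_increasing2 less_imp_le)
  finally have "\<epsilon> * \<bar>x\<bar> \<le> (exp (\<epsilon> * x) + exp (- \<epsilon> * x)) / exp 1"
    by (simp add: divide_right_mono)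
  then show ?thesis using assms by (simp add: field_simps)
qed

lemma final_arith:
  fixes T \<sigma> a r m N L :: real
  assumes T: "T > 0" and s: "\<sigma> > 0" and a: "0 < a" "a < 1" and r: "r \<ge> 1"
    and m: "a * T \<le> m" "m \<le> r * T" and N: "0 \<le> N" "N \<le> r\<^sup>2 * T"
    and h: "5 * L * r\<^sup>2 * \<sigma>\<^sup>2 \<le> a\<^sup>2 * T" and L: "L \<ge> ln 2"
  defines "\<epsilon> \<equiv> 1 / T" and "c \<equiv> a / (r\<^sup>2 * \<sigma>\<^sup>2)"
  defines "E1 \<equiv> \<epsilon> * T - c * m + \<sigma>\<^sup>2 * (\<epsilon>\<^sup>2 * T - 2 * \<epsilon> * c * m + c\<^sup>2 * N) / 2"
    and "E2 \<equiv> - \<epsilon> * T - c * m + \<sigma>\<^sup>2 * (\<epsilon>\<^sup>2 * T + 2 * \<epsilon> * c * m + c\<^sup>2 * N) / 2"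
  shows "T - (1 / (exp 1 * \<epsilon>)) * (exp E1 + exp E2 + exp E2 + exp E1) \<ge> (1 - 2 * exp (- L)) * T"
proof -
  have l2: "ln 2 \<ge> (2/3::real)" by (rule ln2_ge_two_thirds)
  have r2: "r\<^sup>2 \<ge> 1" using r by (simp add: one_le_power)
  have c0: "c > 0" unfolding c_def using a r s by (simp add: add_pos_pos)
  define \<delta> where "\<delta> = \<sigma>\<^sup>2 / (2 * T)"
  have eT: "\<epsilon> * T = 1" unfolding \<epsilon>_def using T by simp
  have d1: "\<sigma>\<^sup>2 * (\<epsilon>\<^sup>2 * T) / 2 = \<delta>" unfolding \<delta>_def \<epsilon>_def using T by (simp add: power2_eq_square field_simps)
  have key: "- c * m + \<sigma>\<^sup>2 * (c\<^sup>2 * N) / 2 \<le> - 5 * L / 2"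
  proof -
    have "c * (a * T) \<le> c * m" using m c0 by simp
    moreover have "\<sigma>\<^sup>2 * (c\<^sup>2 * N) \<le> \<sigma>\<^sup>2 * (c\<^sup>2 * (r\<^sup>2 * T))"
      using N by (simp add: mult_left_mono)
    moreover have "- c * (a * T) + \<sigma>\<^sup>2 * (c\<^sup>2 * (r\<^sup>2 * T)) / 2 = - a\<^sup>2 * T / (2 * r\<^sup>2 * \<sigma>\<^sup>2)"
      unfolding c_def using r2 s by (simp add: power2_eq_square field_simps)
    moreover have "5 * L / 2 \<le> a\<^sup>2 * T / (2 * r\<^sup>2 * \<sigma>\<^sup>2)"
    proof -
      have p: "0 < 2 * r\<^sup>2 * \<sigma>\<^sup>2" using r2 s by (intro mult_pos_pos) auto
      show ?thesis apply (subst pos_le_divide_eq[OF p]) using h by (simp add: algebra_simps)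
    qed
    ultimately show ?thesis by linarith
  qed
  have cross: "\<sigma>\<^sup>2 * (2 * \<epsilon> * c * m) / 2 \<le> 1" and cross0: "0 \<le> \<sigma>\<^sup>2 * (2 * \<epsilon> * c * m) / 2"
  proof -
    have e: "\<sigma>\<^sup>2 * (2 * \<epsilon> * c * m) / 2 = a * m / (r\<^sup>2 * T)"
      unfolding c_def \<epsilon>_def using s T r2 by (simp add: field_simps)
    have m0: "0 \<le> m" using a T m(1) by (smt (verit) mult_pos_pos)
    have "a * m \<le> 1 * (r * T)" using m a m0 by (intro mult_mono) auto
    also have "\<dots> \<le> r\<^sup>2 * T" using r T by (simp add: power2_eq_square)
    finally have am: "a * m \<le> r\<^sup>2 * T" .
    have rT: "0 < r\<^sup>2 * T" using r2 T by (smt (verit) mult_pos_pos)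
    with am show "\<sigma>\<^sup>2 * (2 * \<epsilon> * c * m) / 2 \<le> 1" unfolding e by (subst divide_le_eq_1_pos) auto
    show "0 \<le> \<sigma>\<^sup>2 * (2 * \<epsilon> * c * m) / 2" unfolding e using a m0 rT
      by (intro divide_nonneg_pos mult_nonneg_nonneg) auto
  qed
  have E1: "E1 \<le> 1 + \<delta> - 5 * L / 2"
  proof -
    have "E1 = \<epsilon> * T - c * m + \<sigma>\<^sup>2 * (c\<^sup>2 * N) / 2 + \<sigma>\<^sup>2 * (\<epsilon>\<^sup>2 * T) / 2 - \<sigma>\<^sup>2 * (2 * \<epsilon> * c * m) / 2"
      unfolding E1_def by (simp add: field_simps)
    then show ?thesis using eT d1 key cross0 by linarith
  qed
  have E2: "E2 \<le> 1 + \<delta> - 5 * L / 2"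
  proof -
    have "E2 = - \<epsilon> * T - c * m + \<sigma>\<^sup>2 * (c\<^sup>2 * N) / 2 + \<sigma>\<^sup>2 * (\<epsilon>\<^sup>2 * T) / 2 + \<sigma>\<^sup>2 * (2 * \<epsilon> * c * m) / 2"
      unfolding E2_def by (simp add: field_simps)
    then show ?thesis using eT d1 key cross by linarith
  qed
  have dle: "\<delta> \<le> 3 / 20"
  proof -
    have "5 * L * 1 * \<sigma>\<^sup>2 \<le> 5 * L * r\<^sup>2 * \<sigma>\<^sup>2" using r2 L l2 by (intro mult_right_mono mult_left_mono) auto
    also have "\<dots> \<le> a\<^sup>2 * T" by (rule h)
    also have "\<dots> \<le> 1 * T" using a T by (intro mult_right_mono) (auto simp: power_le_one)
    finally have "5 * L * \<sigma>\<^sup>2 \<le> T" by simp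
    moreover have "(10/3) * \<sigma>\<^sup>2 \<le> 5 * L * \<sigma>\<^sup>2" using L l2 by (intro mult_right_mono) auto
    ultimately have "(10/3) * \<sigma>\<^sup>2 \<le> T" by linarith
    then show ?thesis unfolding \<delta>_def using T by (simp add: field_simps)
  qed
  have ex: "\<delta> - 3 * L / 2 + ln 2 \<le> 0" using dle L l2 by linarith
  have sum_le: "exp E1 + exp E2 + exp E2 + exp E1 \<le> 4 * exp (1 + \<delta> - 5 * L / 2)"
    using E1 E2 by (smt (verit) exp_le_cancel_iff)
  have "(1 / (exp 1 * \<epsilon>)) * (exp E1 + exp E2 + exp E2 + exp E1) \<le> (T / exp 1) * (4 * exp (1 + \<delta> - 5 * L / 2))"
    using sum_le T unfolding \<epsilon>_def by (simp add: divide_right_mono mult_left_mono)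
  also have "\<dots> = 4 * T * exp (\<delta> - 5 * L / 2)"
    by (simp add: exp_add[symmetric] exp_diff field_simps)
  also have "\<dots> = 2 * T * exp (- L) * (2 * exp (\<delta> - 3 * L / 2))"
    by (simp add: exp_add[symmetric] field_simps)
  also have "\<dots> \<le> 2 * T * exp (- L) * 1"
  proof -
    have "2 * exp (\<delta> - 3 * L / 2) = exp (\<delta> - 3 * L / 2 + ln 2)" by (simp add: exp_add)
    also have "\<dots> \<le> 1" using ex by simp
    finally show ?thesis using T by (simp add: mult_left_mono)
  qed
  finally show ?thesis by (simp add: algebra_simps)
qed

lemma omega_meas[measurable]: "omega \<in> borel_measurable borel"
  unfolding omega_def[abs_def] by measurable

lemma lower_pt:
  fixes gp gm W om X1 X2 Y :: real
  assumes "0 \<le> gp" "0 \<le> gm" "0 \<le> om" "om \<le> 1" "1 - om \<le> X1" "om \<le> X2" "\<bar>W\<bar> \<le> Y"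
  shows "gp * (om * W) + gm * (om * W) \<ge> gp * W - gp * (X1 * Y) - gm * (X2 * Y)"
proof -
  have "(1 - om) * W \<le> (1 - om) * \<bar>W\<bar>" using assms by (intro mult_left_mono) auto
  also have "\<dots> \<le> X1 * Y" using assms by (intro mult_mono) auto
  finally have "gp * ((1 - om) * W) \<le> gp * (X1 * Y)" using assms by (intro mult_left_mono) auto
  moreover have "- (om * W) \<le> om * \<bar>W\<bar>" using assms by (smt (verit) mult_minus_right mult_left_mono abs_ge_minus_self)
  then have "- (om * W) \<le> X2 * Y" using assms by (smt (verit) mult_mono abs_ge_zero)
  then have "gm * (- (om * W)) \<le> gm * (X2 * Y)" using assms by (intro mult_left_mono) auto
  ultimately show ?thesis by (simp add: algebra_simps)
qed

theorem lemma2: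
  fixes \<theta>s :: "'a::euclidean_space" and \<sigma> a r \<kappa>1 :: real
  assumes "\<sigma> > 0" and "\<theta>s \<noteq> 0"
    and "0 < a" and "a < 1" and "r \<ge> 1"
    and "a < \<kappa>1" and "\<kappa>1 < 1"
    and "r \<le> a * (norm \<theta>s / \<sigma>) / sqrt (5 * ln (2 / (1 - a / \<kappa>1)))"
    and "\<theta> \<in> D_set \<theta>s a r"
  shows "inner (EM_op \<theta>s \<sigma> \<theta>) \<theta>s \<ge> (a / \<kappa>1) * (norm \<theta>s)\<^sup>2"
proof -
  note s = assms(1)
  define T where "T = (norm \<theta>s)\<^sup>2"
  define q where "q = a / \<kappa>1"
  define L where "L = ln (2 / (1 - q))"
  define m where "m = \<theta> \<bullet> \<theta>s"
  define N where "N = (norm \<theta>)\<^sup>2"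
  define \<epsilon> where "\<epsilon> = 1 / T"
  define c where "c = a / (r\<^sup>2 * \<sigma>\<^sup>2)"
  define l where "l = a / (2 * r\<^sup>2)"
  define gp where "gp = gauss_density \<theta>s \<sigma>"
  define gm where "gm = gauss_density (- \<theta>s) \<sigma>"
  define b1 where "b1 = \<epsilon> *\<^sub>R \<theta>s - c *\<^sub>R \<theta>"
  define b2 where "b2 = - \<epsilon> *\<^sub>R \<theta>s - c *\<^sub>R \<theta>"
  define b3 where "b3 = \<epsilon> *\<^sub>R \<theta>s + c *\<^sub>R \<theta>"
  define b4 where "b4 = - \<epsilon> *\<^sub>R \<theta>s + c *\<^sub>R \<theta>"
  define E1 where "E1 = \<epsilon> * T - c * m + \<sigma>\<^sup>2 * (\<epsilon>\<^sup>2 * T - 2 * \<epsilon> * c * m + c\<^sup>2 * N) / 2"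
  define E2 where "E2 = - \<epsilon> * T - c * m + \<sigma>\<^sup>2 * (\<epsilon>\<^sup>2 * T + 2 * \<epsilon> * c * m + c\<^sup>2 * N) / 2"
  define K where "K = (\<lambda>y. (exp (b1 \<bullet> y) * gp y + exp (b2 \<bullet> y) * gp y + exp (b3 \<bullet> y) * gm y + exp (b4 \<bullet> y) * gm y) / (exp 1 * \<epsilon>))"
  have T0: "T > 0" unfolding T_def using assms(2) by simp
  have r2: "r\<^sup>2 \<ge> 1" using assms(5) by (simp add: one_le_power)
  have q0: "0 < q" "q < 1" unfolding q_def using assms by auto
  have TT: "\<theta>s \<bullet> \<theta>s = T" unfolding T_def by (simp add: power2_norm_eq_inner)
  have NN: "\<theta> \<bullet> \<theta> = N" unfolding N_def by (simp add: power2_norm_eq_inner)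
  have mD: "a * T \<le> m" "norm \<theta> \<le> r * norm \<theta>s"
    using assms(9) unfolding D_set_def m_def T_def by auto
  have mle: "m \<le> r * T"
  proof -
    have "m \<le> norm \<theta> * norm \<theta>s" unfolding m_def by (rule norm_cauchy_schwarz)
    also have "\<dots> \<le> r * norm \<theta>s * norm \<theta>s" using mD(2) by (simp add: mult_right_mono)
    finally show ?thesis unfolding T_def by (simp add: power2_eq_square mult.assoc)
  qed
  have Nle: "N \<le> r\<^sup>2 * T"
    unfolding N_def T_def using mD(2) by (metis norm_ge_zero power_mono power_mult_distrib)
  have L2: "L \<ge> ln 2"
    unfolding L_def using q0 by (subst ln_le_cancel_iff) (auto simp: field_simps)
  have L0: "L > 0" using L2 ln2_ge_two_thirds by linarith
  have hq: "(1 - 2 * exp (- L)) = q"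
  proof -
    have "exp L = 2 / (1 - q)" unfolding L_def using q0 by simp
    then show ?thesis using q0 by (simp add: exp_minus field_simps)
  qed
  have h: "5 * L * r\<^sup>2 * \<sigma>\<^sup>2 \<le> a\<^sup>2 * T"
  proof -
    have sq: "sqrt (5 * L) > 0" using L0 by simp
    have "r * sqrt (5 * L) \<le> a * (norm \<theta>s / \<sigma>)"
    proof -
      have "r \<le> a * (norm \<theta>s / \<sigma>) / sqrt (5 * L)" using assms(8) unfolding L_def q_def .
      then show ?thesis using pos_le_divide_eq[OF sq] by blast
    qed
    then have "(r * sqrt (5 * L))\<^sup>2 \<le> (a * (norm \<theta>s / \<sigma>))\<^sup>2"
      using assms(5) sq by (intro power_mono) auto
    then have "r\<^sup>2 * (5 * L) \<le> a\<^sup>2 * T / \<sigma>\<^sup>2"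
      using L0 unfolding T_def by (simp add: power_mult_distrib power_divide)
    then show ?thesis using s by (simp add: field_simps)
  qed
  have fin: "T - (1 / (exp 1 * \<epsilon>)) * (exp E1 + exp E2 + exp E2 + exp E1) \<ge> q * T"
    using final_arith[OF T0 s assms(3,4,5) mD(1) mle _ Nle h L2] hq
    unfolding E1_def E2_def \<epsilon>_def c_def N_def by simp
  have mm: "\<theta> \<bullet> \<theta>s = m" "\<theta>s \<bullet> \<theta> = m" unfolding m_def by (simp_all add: inner_commute)
  have nb1: "b1 \<bullet> \<theta>s + \<sigma>\<^sup>2 * (norm b1)\<^sup>2 / 2 = E1"
    unfolding power2_norm_eq_inner b1_def E1_def
    by (simp add: inner_diff_left inner_diff_right TT NN mm power2_eq_square algebra_simps)
  have nb2: "b2 \<bullet> \<theta>s + \<sigma>\<^sup>2 * (norm b2)\<^sup>2 / 2 = E2"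
    unfolding power2_norm_eq_inner b2_def E2_def
    by (simp add: inner_diff_left inner_diff_right TT NN mm power2_eq_square algebra_simps)
  have nb3: "\<sigma>\<^sup>2 * (norm b3)\<^sup>2 / 2 - b3 \<bullet> \<theta>s = E2"
    unfolding power2_norm_eq_inner b3_def E2_def
    by (simp add: inner_add_left inner_add_right TT NN mm power2_eq_square algebra_simps)
  have nb4: "\<sigma>\<^sup>2 * (norm b4)\<^sup>2 / 2 - b4 \<bullet> \<theta>s = E1"
    unfolding power2_norm_eq_inner b4_def E1_def
    by (simp add: inner_add_left inner_add_right TT NN mm power2_eq_square algebra_simps)
  have eps0: "\<epsilon> > 0" unfolding \<epsilon>_def using T0 by simp
  have intK: "integrable lborel K"
    unfolding K_def gp_def gm_def
    by (intro integrable_divide_zero Bochner_Integration.integrable_add mgf(1)[OF s])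
  have IK: "(\<integral>y. K y \<partial>lborel) = (1 / (exp 1 * \<epsilon>)) * (exp E1 + exp E2 + exp E2 + exp E1)"
    unfolding K_def gp_def gm_def
    by (simp add: Bochner_Integration.integral_add mgf[OF s] Bochner_Integration.integrable_add nb1 nb2 nb3 nb4)
  define w where "w = (\<lambda>y. y \<bullet> \<theta>s)"
  define u where "u = (\<lambda>y. \<theta> \<bullet> y / \<sigma>\<^sup>2)"
  define md where "md = mix_density \<theta>s \<sigma>"
  have md_eq: "md y = gp y / 2 + gm y / 2" for y unfolding md_def gp_def gm_def mix_density_def by simp
  define \<Phi> where "\<Phi> = (\<lambda>y. md y * (omega (u y) * w y))"
  have intGW: "integrable lborel (\<lambda>y. gp y * w y)"
    unfolding gp_def w_def by (rule mean_integrable[OF s])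
  have IGW: "(\<integral>y. gp y * w y \<partial>lborel) = T"
    unfolding gp_def w_def using mean_integral[OF s, of \<theta>s \<theta>s] TT by simp
  have gpn: "0 \<le> gp y" "0 \<le> gm y" for y unfolding gp_def gm_def by (simp_all add: gauss_nonneg)
  have ptw: "2 * \<Phi> y \<ge> gp y * w y - K y" for y
  proof -
    have l01: "0 \<le> l" "l \<le> 1"
    proof -
      have p: "0 < 2 * r\<^sup>2" using r2 by linarith
      show "0 \<le> l" unfolding l_def using assms(3) p by simp
      show "l \<le> 1" unfolding l_def using assms(4) p r2 by (subst divide_le_eq_1_pos) auto
    qed
    have X1: "1 - omega (u y) \<le> exp (- 2 * l * u y)" by (rule one_minus_omega_le_exp[OF l01])
    have X2: "omega (u y) \<le> exp (2 * l * u y)" by (rule omega_le_exp[OF l01])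
    have Y: "\<bar>w y\<bar> \<le> (exp (\<epsilon> * w y) + exp (- \<epsilon> * w y)) / (exp 1 * \<epsilon>)" by (rule abs_le_exp_eps[OF eps0])
    have cl: "2 * l * u y = c * (\<theta> \<bullet> y)" unfolding l_def u_def c_def using s r2
      by (simp add: field_simps)
    have e1: "exp (- 2 * l * u y) * ((exp (\<epsilon> * w y) + exp (- \<epsilon> * w y)) / (exp 1 * \<epsilon>))
        = (exp (b1 \<bullet> y) + exp (b2 \<bullet> y)) / (exp 1 * \<epsilon>)"
    proof -
      have "- 2 * l * u y = - (c * (\<theta> \<bullet> y))" using cl by simp
      then show ?thesis unfolding b1_def b2_def w_def
        by (simp add: exp_add[symmetric] distrib_left inner_diff_left inner_commute algebra_simps add_divide_distrib)
    qed
    have e2: "exp (2 * l * u y) * ((exp (\<epsilon> * w y) + exp (- \<epsilon> * w y)) / (exp 1 * \<epsilon>))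
        = (exp (b3 \<bullet> y) + exp (b4 \<bullet> y)) / (exp 1 * \<epsilon>)"
      unfolding cl b3_def b4_def w_def
      by (simp add: exp_add[symmetric] distrib_left inner_add_left inner_commute algebra_simps add_divide_distrib)
    have "gp y * (omega (u y) * w y) + gm y * (omega (u y) * w y) \<ge> gp y * w y
        - gp y * (exp (- 2 * l * u y) * ((exp (\<epsilon> * w y) + exp (- \<epsilon> * w y)) / (exp 1 * \<epsilon>)))
        - gm y * (exp (2 * l * u y) * ((exp (\<epsilon> * w y) + exp (- \<epsilon> * w y)) / (exp 1 * \<epsilon>)))"
      by (rule lower_pt[OF gpn(1) gpn(2) omega_nonneg omega_le1 X1 X2 Y])
    then show ?thesis unfolding e1 e2 \<Phi>_def md_eq K_def by (simp add: algebra_simps add_divide_distrib)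
  qed
  have intGMW: "integrable lborel (\<lambda>y. gm y * w y)"
    unfolding gm_def w_def by (rule mean_integrable[OF s])
  have mdn: "0 \<le> md y" for y using gpn[of y] md_eq[of y] by simp
  have int\<Phi>: "integrable lborel \<Phi>"
  proof (rule Bochner_Integration.integrable_bound)
    show "integrable lborel (\<lambda>y. \<bar>gp y * w y\<bar> + \<bar>gm y * w y\<bar>)"
      using intGW intGMW by (intro Bochner_Integration.integrable_add integrable_abs)
    show "\<Phi> \<in> borel_measurable lborel"
      unfolding \<Phi>_def md_def u_def w_def mix_density_def by measurable
    show "AE y in lborel. norm (\<Phi> y) \<le> norm (\<bar>gp y * w y\<bar> + \<bar>gm y * w y\<bar>)"
    proof (rule AE_I2)
      fix y
      have "\<bar>\<Phi> y\<bar> = md y * (omega (u y) * \<bar>w y\<bar>)"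
        unfolding \<Phi>_def using mdn[of y] omega_nonneg[of "u y"] by (simp add: abs_mult)
      also have "\<dots> \<le> md y * (1 * \<bar>w y\<bar>)"
        using mdn[of y] omega_le1[of "u y"] by (intro mult_left_mono mult_right_mono) auto
      also have "\<dots> \<le> \<bar>gp y * w y\<bar> + \<bar>gm y * w y\<bar>"
      proof -
        have A: "md y * (1 * \<bar>w y\<bar>) = gp y * \<bar>w y\<bar> / 2 + gm y * \<bar>w y\<bar> / 2"
          by (simp add: md_eq algebra_simps)
        have B: "0 \<le> gp y * \<bar>w y\<bar>" "0 \<le> gm y * \<bar>w y\<bar>" using gpn[of y] by simp_all
        have C: "\<bar>gp y * w y\<bar> = gp y * \<bar>w y\<bar>" "\<bar>gm y * w y\<bar> = gm y * \<bar>w y\<bar>"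
          using gpn[of y] by (simp_all add: abs_mult)
        show ?thesis unfolding A C using B by linarith
      qed
      finally show "norm (\<Phi> y) \<le> norm (\<bar>gp y * w y\<bar> + \<bar>gm y * w y\<bar>)" by simp
    qed
  qed
  define V where "V = (\<lambda>y. omega (u y) *\<^sub>R y)"
  have Vm[measurable]: "V \<in> borel_measurable borel" unfolding V_def u_def by measurable
  have mdm[measurable]: "md \<in> borel_measurable borel" unfolding md_def mix_density_def by measurable
  have mixeq: "mix_measure \<theta>s \<sigma> = density lborel (\<lambda>y. ennreal (md y))"
    unfolding mix_measure_def md_def ..
  have intV: "integrable (mix_measure \<theta>s \<sigma>) V"
  proof -
    have "integrable lborel (\<lambda>y. md y *\<^sub>R V y)"
    proof (rule Bochner_Integration.integrable_bound)
      show "integrable lborel (\<lambda>y. \<Sum>b\<in>Basis. \<bar>gp y * (y \<bullet> b)\<bar> + \<bar>gm y * (y \<bullet> b)\<bar>)"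
        unfolding gp_def gm_def
        by (intro Bochner_Integration.integrable_sum Bochner_Integration.integrable_add integrable_abs mean_integrable[OF s])
      show "(\<lambda>y. md y *\<^sub>R V y) \<in> borel_measurable lborel" by measurable
      show "AE y in lborel. norm (md y *\<^sub>R V y) \<le> norm (\<Sum>b\<in>Basis. \<bar>gp y * (y \<bullet> b)\<bar> + \<bar>gm y * (y \<bullet> b)\<bar>)"
      proof (rule AE_I2)
        fix y :: 'a
        have "norm (md y *\<^sub>R V y) = md y * (omega (u y) * norm y)"
          unfolding V_def using mdn[of y] omega_nonneg[of "u y"] by simp
        also have "\<dots> \<le> md y * (1 * norm y)"
          using mdn[of y] omega_le1[of "u y"] by (intro mult_left_mono mult_right_mono) auto
        also have "\<dots> \<le> md y * (\<Sum>b\<in>Basis. \<bar>y \<bullet> b\<bar>)"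
          using mdn[of y] norm_le_l1[of y] by (simp add: mult_left_mono)
        also have "\<dots> = (\<Sum>b\<in>Basis. md y * \<bar>y \<bullet> b\<bar>)" by (simp add: sum_distrib_left)
        also have "\<dots> \<le> (\<Sum>b\<in>Basis. \<bar>gp y * (y \<bullet> b)\<bar> + \<bar>gm y * (y \<bullet> b)\<bar>)"
        proof (intro sum_mono)
          fix b :: 'a
          have B: "0 \<le> gp y * \<bar>y \<bullet> b\<bar>" "0 \<le> gm y * \<bar>y \<bullet> b\<bar>" using gpn[of y] by simp_all
          have A: "md y * \<bar>y \<bullet> b\<bar> = gp y * \<bar>y \<bullet> b\<bar> / 2 + gm y * \<bar>y \<bullet> b\<bar> / 2"
            by (simp add: md_eq algebra_simps)
          have C: "\<bar>gp y * (y \<bullet> b)\<bar> = gp y * \<bar>y \<bullet> b\<bar>" "\<bar>gm y * (y \<bullet> b)\<bar> = gm y * \<bar>y \<bullet> b\<bar>"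
            using gpn[of y] by (simp_all add: abs_mult)
          show "md y * \<bar>y \<bullet> b\<bar> \<le> \<bar>gp y * (y \<bullet> b)\<bar> + \<bar>gm y * (y \<bullet> b)\<bar>"
            unfolding A C using B by linarith
        qed
        also have "\<dots> \<le> norm (\<Sum>b\<in>Basis. \<bar>gp y * (y \<bullet> b)\<bar> + \<bar>gm y * (y \<bullet> b)\<bar>)" by simp
        finally show "norm (md y *\<^sub>R V y) \<le> norm (\<Sum>b\<in>Basis. \<bar>gp y * (y \<bullet> b)\<bar> + \<bar>gm y * (y \<bullet> b)\<bar>)" .
      qed
    qed
    then show ?thesis unfolding mixeq using mdn by (subst integrable_density) auto
  qed
  have red: "inner (EM_op \<theta>s \<sigma> \<theta>) \<theta>s = (\<integral>y. 2 * \<Phi> y \<partial>lborel)"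
  proof -
    have "inner (EM_op \<theta>s \<sigma> \<theta>) \<theta>s = 2 * ((\<integral>y. V y \<partial>mix_measure \<theta>s \<sigma>) \<bullet> \<theta>s)"
      unfolding EM_op_def V_def u_def by simp
    also have "(\<integral>y. V y \<partial>mix_measure \<theta>s \<sigma>) \<bullet> \<theta>s = (\<integral>y. V y \<bullet> \<theta>s \<partial>mix_measure \<theta>s \<sigma>)"
      using intV by simp
    also have "\<dots> = (\<integral>y. omega (u y) * w y \<partial>mix_measure \<theta>s \<sigma>)"
      unfolding V_def w_def by simp
    also have "\<dots> = (\<integral>y. md y *\<^sub>R (omega (u y) * w y) \<partial>lborel)"
      unfolding mixeq using mdn by (subst integral_density) (auto simp: u_def w_def)
    also have "\<dots> = (\<integral>y. \<Phi> y \<partial>lborel)" unfolding \<Phi>_def by simp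
    finally show ?thesis by simp
  qed
  have "(\<integral>y. 2 * \<Phi> y \<partial>lborel) \<ge> (\<integral>y. gp y * w y - K y \<partial>lborel)"
    using ptw intGW intK int\<Phi> by (intro integral_mono) auto
  also have "(\<integral>y. gp y * w y - K y \<partial>lborel) = T - (1 / (exp 1 * \<epsilon>)) * (exp E1 + exp E2 + exp E2 + exp E1)"
    using intGW intK IGW IK by simp
  finally have "inner (EM_op \<theta>s \<sigma> \<theta>) \<theta>s \<ge> q * T" using red fin by linarith
  then show ?thesis unfolding q_def T_def .
qed

end
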